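(* For every $n\ge 2$ we have $\mathrm{OT}_n(\mathbb{C})\subseteq\mathrm{ODECO}_n(\mathbb{C})\subseteq\overline{\mathrm{OT}_n(\mathbb{C})}$, and the first inclusion is strict for every $n\ge 2$.
   Context: Associate to $T\in\mathbb{C}^{n\times n\times n}$ the trilinear form $t(x,y,z)=\sum_{i,j,k}T_{ijk}x_iy_jz_k$. $\mathrm{OT}_n(\mathbb{C})$ is the set of tensors whose trilinear form can be written $t(x,y,z)=g(Ax,By,Cz)$ with $A,B,C$ complex orthogonal ($A^TA=\mathrm{Id}$ etc.) and $g=\sum_{i=1}^n\alpha_ix_iy_iz_i$. On $\mathbb{C}^n$ use the bilinear form $\langle x,y\rangle=\sum_ix_iy_i$. $\mathrm{ODECO}_n(\mathbb{C})$ is the set of tensors that can be written $\sum_{j=1}^k u_j\otimes v_j\otimes w_j$ where each of the lists $(u_1,\dots,u_k)$, $(v_1,\dots,v_k)$, $(w_1,\dots,w_k)$ consists of $k$ linearly independent, pairwise orthogonal (w.r.t. $\langle\cdot,\cdot\rangle$) vectors of $\mathbb{C}^n$. Closure is in the Euclidean topology of $\mathbb{C}^{n\times n\times n}$. *)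

theory Defs
  imports "HOL-Analysis.Analysis"
begin

text \<open>Tensors in C^{n x n x n}, indexed by a finite type 'n with CARD('n) = n.
  Entry T_{ijk} is T $ i $ j $ k.\<close>
type_synonym 'n tensor3 = "complex ^'n ^'n ^'n"

text \<open>The (non-Hermitian) symmetric bilinear form on C^n.\<close>
definition bil :: "complex ^('n::finite) \<Rightarrow> complex ^'n \<Rightarrow> complex" where
  "bil x y = (\<Sum>i\<in>UNIV. x $ i * y $ i)"

definition trilin :: "('n::finite) tensor3 \<Rightarrow> complex ^'n \<Rightarrow> complex ^'n \<Rightarrow> complex ^'n \<Rightarrow> complex" where
  "trilin T x y z = (\<Sum>i\<in>UNIV. \<Sum>j\<in>UNIV. \<Sum>k\<in>UNIV. T $ i $ j $ k * x $ i * y $ j * z $ k)"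

definition diag_form :: "complex ^('n::finite) \<Rightarrow> complex ^'n \<Rightarrow> complex ^'n \<Rightarrow> complex ^'n \<Rightarrow> complex" where
  "diag_form \<alpha> x y z = (\<Sum>i\<in>UNIV. \<alpha> $ i * x $ i * y $ i * z $ i)"

definition corthogonal :: "complex ^'n::finite ^'n \<Rightarrow> bool" where
  "corthogonal A \<longleftrightarrow> transpose A ** A = mat 1"

definition OT :: "('n::finite) tensor3 set" where
  "OT = {T. \<exists>A B C \<alpha>. corthogonal A \<and> corthogonal B \<and> corthogonal C \<and>
            (\<forall>x y z. trilin T x y z = diag_form \<alpha> (A *v x) (B *v y) (C *v z))}"

definition outer3 :: "complex ^'n \<Rightarrow> complex ^'n \<Rightarrow> complex ^'n \<Rightarrow> 'n tensor3" where
  "outer3 u v w = (\<chi> i j k. u $ i * v $ j * w $ k)"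

definition lin_indep_orth :: "nat \<Rightarrow> (nat \<Rightarrow> complex ^('n::finite)) \<Rightarrow> bool" where
  "lin_indep_orth k u \<longleftrightarrow>
     (\<forall>c :: nat \<Rightarrow> complex. (\<Sum>j<k. c j *s u j) = 0 \<longrightarrow> (\<forall>j<k. c j = 0)) \<and>
     (\<forall>i<k. \<forall>j<k. i \<noteq> j \<longrightarrow> bil (u i) (u j) = 0)"

definition ODECO :: "('n::finite) tensor3 set" where
  "ODECO = {T. \<exists>k u v w. lin_indep_orth k u \<and> lin_indep_orth k v \<and> lin_indep_orth k w \<and>
              T = (\<Sum>j<k. outer3 (u j) (v j) (w j))}"

end

theory Submission
  imports Defs
begin
lemma bil_sym: "bil x y = bil y x"
  unfolding bil_def by (simp add: mult.commute)

lemma corth_rows: "corthogonal A \<Longrightarrow> bil (A$i) (A$j) = (if i = j then 1 else 0)"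
proof -
  assume "corthogonal A"
  then have "A ** transpose A = mat 1" unfolding corthogonal_def
    using matrix_left_right_inverse by blast
  then have "(A ** transpose A) $ i $ j = mat 1 $ i $ j" by simp
  then show ?thesis by (simp add: matrix_matrix_mult_def transpose_def mat_def bil_def)
qed

lemma rows_corth: "(\<And>i j. bil (A$i) (A$j) = (if i = j then 1 else 0)) \<Longrightarrow> corthogonal A"
proof -
  assume h: "\<And>i j. bil (A$i) (A$j) = (if i = j then 1 else 0)"
  have "A ** transpose A = mat 1"
    by (simp add: vec_eq_iff matrix_matrix_mult_def transpose_def mat_def h[unfolded bil_def])
  then show ?thesis unfolding corthogonal_def using matrix_left_right_inverse by blast
qed

definition indep :: "nat \<Rightarrow> (nat \<Rightarrow> complex ^('n::finite)) \<Rightarrow> bool" where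
  "indep k u \<longleftrightarrow> (\<forall>c :: nat \<Rightarrow> complex. (\<Sum>j<k. c j *s u j) = 0 \<longrightarrow> (\<forall>j<k. c j = 0))"

lemma indep_inj: assumes "indep k u" shows "inj_on u {..<k}"
proof (rule inj_onI, rule ccontr)
  fix i j assume ij: "i \<in> {..<k}" "j \<in> {..<k}" "u i = u j" "i \<noteq> j"
  define c where "c l = (if l = i then 1 else if l = j then -1 else (0::complex))" for l
  have "(\<Sum>l<k. c l *s u l) = (\<Sum>l<k. (if l = i then u i else 0) - (if l = j then u j else 0))"
    by (intro sum.cong) (auto simp: c_def ij)
  also have "\<dots> = 0" using ij by (simp add: sum_subtractf)
  finally have "c i = 0" using assms ij unfolding indep_def by blast
  then show False by (simp add: c_def)
qed

lemma indep_vec: assumes "indep k u" shows "vec.independent (u ` {..<k})"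
proof -
  have inj: "inj_on u {..<k}" by (rule indep_inj[OF assms])
  show ?thesis unfolding vec.independent_explicit
  proof (intro conjI allI impI ballI)
    show "finite (u ` {..<k})" by simp
    fix c v assume s: "(\<Sum>v\<in>u ` {..<k}. c v *s v) = 0" and v: "v \<in> u ` {..<k}"
    have "(\<Sum>j<k. c (u j) *s u j) = 0" using s by (simp add: sum.reindex[OF inj])
    then have "\<forall>j<k. c (u j) = 0" using assms[unfolded indep_def, rule_format, of "\<lambda>j. c (u j)"] by blast
    then show "c v = 0" using v by auto
  qed
qed

lemma indep_le: assumes "indep k (u::nat \<Rightarrow> complex^'n::finite)" shows "k \<le> CARD('n)"
proof -
  have "card (u ` {..<k}) \<le> vec.dim (UNIV :: (complex^'n) set)"
    by (rule vec.independent_card_le_dim[OF subset_UNIV indep_vec[OF assms]])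
  moreover have "card (u ` {..<k}) = k" using card_image[OF indep_inj[OF assms]] by simp
  moreover have "vec.dim (UNIV :: (complex^'n) set) = CARD('n)" by (rule vec_dim_card)
  ultimately show ?thesis by linarith
qed

lemma bil_add_left: "bil (x + y) z = bil x z + bil y z"
  unfolding bil_def by (simp add: distrib_right sum.distrib)
lemma bil_add_right: "bil z (x + y) = bil z x + bil z y"
  unfolding bil_def by (simp add: distrib_left sum.distrib)
lemma bil_diff_left: "bil (x - y) z = bil x z - bil y z"
  unfolding bil_def by (simp add: left_diff_distrib sum_subtractf)
lemma bil_diff_right: "bil z (x - y) = bil z x - bil z y"
  unfolding bil_def by (simp add: right_diff_distrib sum_subtractf)
lemma bil_scale_left: "bil (c *s x) y = c * bil x y"
  unfolding bil_def by (simp add: sum_distrib_left mult.assoc)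
lemma bil_scale_right: "bil y (c *s x) = c * bil y x"
  unfolding bil_def by (simp add: sum_distrib_left algebra_simps)
lemma bil_zero_left[simp]: "bil 0 y = 0"
  unfolding bil_def by simp
lemma bil_zero_right[simp]: "bil y 0 = 0"
  unfolding bil_def by simp
lemma bil_sum_left: "bil (\<Sum>j\<in>S. f j) y = (\<Sum>j\<in>S. bil (f j) y)"
  by (induction S rule: infinite_finite_induct) (auto simp: bil_add_left)
lemma bil_sum_right: "bil y (\<Sum>j\<in>S. f j) = (\<Sum>j\<in>S. bil y (f j))"
  by (induction S rule: infinite_finite_induct) (auto simp: bil_add_right)
lemma bil_axis: "bil x (axis i 1) = x $ i"
  unfolding bil_def axis_def by (simp add: if_distrib cong: if_cong)
lemma bil_nondeg: "(\<And>z. bil w z = 0) \<Longrightarrow> w = 0"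
  by (metis bil_axis vec_eq_iff zero_index)

definition orthonormal :: "nat \<Rightarrow> (nat \<Rightarrow> complex ^('n::finite)) \<Rightarrow> bool" where
  "orthonormal m a \<longleftrightarrow> (\<forall>i<m. \<forall>j<m. bil (a i) (a j) = (if i = j then 1 else 0))"

lemma ext_step:
  assumes on: "orthonormal m (a::nat \<Rightarrow> complex^'n::finite)" and mlt: "m < CARD('n)"
  shows "\<exists>x. (\<forall>j<m. bil (a j) x = 0) \<and> bil x x = 1"
proof -
  have "\<exists>x. (\<forall>j<m. bil (a j) x = 0) \<and> bil x x \<noteq> 0"
  proof (rule ccontr)
    assume "\<not> ?thesis"
    then have H: "\<And>x. (\<forall>j<m. bil (a j) x = 0) \<Longrightarrow> bil x x = 0" by blast
    have W2: "bil w w' = 0" if "\<forall>j<m. bil (a j) w = 0" "\<forall>j<m. bil (a j) w' = 0" for w w'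
    proof -
      have "\<forall>j<m. bil (a j) (w + w') = 0" using that by (simp add: bil_add_right)
      then have "bil (w + w') (w + w') = 0" by (rule H)
      then have "bil w w + 2 * bil w w' + bil w' w' = 0"
        by (simp add: bil_add_left bil_add_right bil_sym[of w' w] algebra_simps)
      then show ?thesis using H that by simp
    qed
    define p where "p z = (\<Sum>j<m. bil (a j) z *s a j)" for z
    have pW: "\<forall>i<m. bil (a i) (z - p z) = 0" for z
    proof (intro allI impI)
      fix i assume i: "i < m"
      have "bil (a i) (p z) = (\<Sum>j<m. bil (a j) z * bil (a i) (a j))"
        by (simp add: p_def bil_sum_right bil_scale_right)
      also have "\<dots> = (\<Sum>j<m. if j = i then bil (a j) z else 0)"
        using on i unfolding orthonormal_def by (intro sum.cong) auto
      also have "\<dots> = bil (a i) z" using i by simp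
      finally show "bil (a i) (z - p z) = 0" by (simp add: bil_diff_right)
    qed
    have zp: "z = p z" for z
    proof -
      have "bil (z - p z) y = 0" for y
      proof -
        have "bil (z - p z) y = bil (z - p z) (y - p y) + bil (z - p z) (p y)"
          by (simp add: bil_diff_right)
        also have "bil (z - p z) (y - p y) = 0" using W2 pW by blast
        also have "bil (z - p z) (p y) = (\<Sum>j<m. bil (a j) y * bil (z - p z) (a j))"
          by (simp add: p_def bil_sum_right bil_scale_right)
        also have "\<dots> = 0" using pW by (simp add: bil_sym)
        finally show ?thesis by simp
      qed
      then have "z - p z = 0" by (rule bil_nondeg)
      then show ?thesis by simp
    qed
    have "UNIV \<subseteq> vec.span (a ` {..<m})"
    proof
      fix z :: "complex^'n"
      have "p z \<in> vec.span (a ` {..<m})" unfolding p_def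
        by (intro vec.span_sum vec.span_scale vec.span_base) auto
      then show "z \<in> vec.span (a ` {..<m})" using zp by metis
    qed
    then have "vec.dim (UNIV :: (complex^'n) set) \<le> card (a ` {..<m})"
      by (intro vec.dim_le_card) auto
    moreover have "card (a ` {..<m}) \<le> m" using card_image_le[of "{..<m}" a] by simp
    moreover have "vec.dim (UNIV :: (complex^'n) set) = CARD('n)" by (rule vec_dim_card)
    ultimately show False using mlt by linarith
  qed
  then obtain x where x: "\<forall>j<m. bil (a j) x = 0" "bil x x \<noteq> 0" by blast
  define r where "r = csqrt (bil x x)"
  have r2: "r * r = bil x x" using power2_csqrt[of "bil x x"] by (simp add: r_def power2_eq_square)
  then have r0: "r \<noteq> 0" using x by auto
  show ?thesis
  proof (intro exI conjI allI impI)
    show "bil (a j) ((1/r) *s x) = 0" if "j < m" for j using x that by (simp add: bil_scale_right)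
    show "bil ((1/r) *s x) ((1/r) *s x) = 1" using r0 r2 x(2)
      by (simp add: bil_scale_right bil_scale_left field_simps)
  qed
qed

lemma ext_full:
  assumes "orthonormal m (a::nat \<Rightarrow> complex^'n::finite)" "m \<le> CARD('n)"
  shows "\<exists>b. orthonormal CARD('n) b \<and> (\<forall>j<m. b j = a j)"
  using assms
proof (induction "CARD('n) - m" arbitrary: m a)
  case 0
  then have "m = CARD('n)" by simp
  then show ?case using 0 by blast
next
  case (Suc d)
  then have mlt: "m < CARD('n)" by simp
  obtain x where x: "\<forall>j<m. bil (a j) x = 0" "bil x x = 1" using ext_step[OF Suc.prems(1) mlt] by blast
  define a' where "a' = a(m := x)"
  have on': "orthonormal (Suc m) a'"
    unfolding orthonormal_def
  proof (intro allI impI)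
    fix i j assume ij: "i < Suc m" "j < Suc m"
    show "bil (a' i) (a' j) = (if i = j then 1 else 0)"
    proof (cases "i = m")
      case True
      then show ?thesis
      proof (cases "j = m")
        case True
        then show ?thesis using \<open>i = m\<close> x by (simp add: a'_def)
      next
        case False
        then have "j < m" using ij by simp
        then show ?thesis using \<open>i = m\<close> x False by (simp add: a'_def bil_sym[of x "a j"])
      qed
    next
      case False
      then have im: "i < m" using ij by simp
      show ?thesis
      proof (cases "j = m")
        case True
        then show ?thesis using im x by (simp add: a'_def)
      next
        case False
        then have "j < m" using ij by simp
        then show ?thesis using im Suc.prems(1) unfolding orthonormal_def by (simp add: a'_def)
      qed
    qed
  qed
  obtain b where b: "orthonormal CARD('n) b" "\<forall>j<Suc m. b j = a' j"
    using Suc.hyps(1)[of "Suc m" a'] Suc.hyps(2) on' mlt by (metis Suc_diff_Suc Suc_leI diff_Suc_1 nat.inject)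
  then show ?case by (auto simp: a'_def)
qed

lemma mv_bil: "(A *v x) $ i = bil (A $ i) x"
  unfolding bil_def matrix_vector_mult_def by simp

lemma trilin_outer3: "trilin (outer3 u v w) x y z = bil u x * bil v y * bil w z"
proof -
  have "bil w z * bil v y * bil u x = (\<Sum>i\<in>UNIV. \<Sum>j\<in>UNIV. \<Sum>k\<in>UNIV. (w$k*z$k)*(v$j*y$j)*(u$i*x$i))"
    by (simp add: bil_def sum_distrib_left sum_distrib_right)
  then show ?thesis unfolding trilin_def outer3_def by (simp add: mult_ac)
qed
lemma trilin_add: "trilin (S + T) x y z = trilin S x y z + trilin T x y z"
  unfolding trilin_def by (simp add: algebra_simps sum.distrib)
lemma trilin_zero[simp]: "trilin 0 x y z = 0"
  unfolding trilin_def by simp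
lemma trilin_sum: "trilin (\<Sum>j\<in>S. f j) x y z = (\<Sum>j\<in>S. trilin (f j) x y z)"
  by (induction S rule: infinite_finite_induct) (auto simp: trilin_add)

definition orthnz :: "nat \<Rightarrow> (nat \<Rightarrow> complex ^('n::finite)) \<Rightarrow> bool" where
  "orthnz k u \<longleftrightarrow> (\<forall>i<k. \<forall>j<k. i \<noteq> j \<longrightarrow> bil (u i) (u j) = 0) \<and> (\<forall>j<k. bil (u j) (u j) \<noteq> 0)"

lemma norm_ext:
  assumes "orthnz k (u::nat \<Rightarrow> complex^'n::finite)" "k \<le> CARD('n)"
  shows "\<exists>a r. orthonormal CARD('n) a \<and> (\<forall>j<k. u j = r j *s a j)"
proof -
  define r where "r j = csqrt (bil (u j) (u j))" for j
  have r2: "r j * r j = bil (u j) (u j)" for j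
    using power2_csqrt[of "bil (u j) (u j)"] by (simp add: r_def power2_eq_square)
  have r0: "j < k \<Longrightarrow> r j \<noteq> 0" for j using assms(1) r2[of j] unfolding orthnz_def by auto
  define a where "a j = (1 / r j) *s u j" for j
  have "orthonormal k a" unfolding orthonormal_def
  proof (intro allI impI)
    fix i j assume ij: "i < k" "j < k"
    show "bil (a i) (a j) = (if i = j then 1 else 0)"
    proof (cases "i = j")
      case True
      then show ?thesis using r0[OF ij(1)] r2[of i] assms(1) ij unfolding orthnz_def
        by (simp add: a_def bil_scale_left bil_scale_right field_simps)
    next
      case False
      then show ?thesis using assms(1) ij unfolding orthnz_def
        by (simp add: a_def bil_scale_left bil_scale_right)
    qed
  qed
  then obtain b where b: "orthonormal CARD('n) b" "\<forall>j<k. b j = a j"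
    using ext_full assms(2) by blast
  have "\<forall>j<k. u j = r j *s b j" using b(2) r0 by (simp add: a_def)
  with b(1) show ?thesis by blast
qed

lemma sum_in_OT:
  assumes kn: "k \<le> CARD('n)"
    and ou: "orthnz k (u::nat \<Rightarrow> complex^'n::finite)" and ov: "orthnz k v" and ow: "orthnz k w"
  shows "(\<Sum>j<k. outer3 (u j) (v j) (w j)) \<in> OT"
proof -
  obtain a ra where a: "orthonormal CARD('n) a" "\<forall>j<k. u j = ra j *s a j" using norm_ext[OF ou kn] by blast
  obtain b rb where b: "orthonormal CARD('n) b" "\<forall>j<k. v j = rb j *s b j" using norm_ext[OF ov kn] by blast
  obtain c rc where c: "orthonormal CARD('n) c" "\<forall>j<k. w j = rc j *s c j" using norm_ext[OF ow kn] by blast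
  obtain \<iota> :: "'n \<Rightarrow> nat" where bij: "bij_betw \<iota> UNIV {0..<CARD('n)}"
    using ex_bij_betw_finite_nat[of "UNIV :: 'n set"] by auto
  have inj: "\<iota> i = \<iota> j \<longleftrightarrow> i = j" for i j using bij by (auto simp: bij_betw_def inj_on_def)
  have rng: "\<iota> i < CARD('n)" for i using bij by (auto simp: bij_betw_def)
  have mk: "corthogonal (\<chi> i. f (\<iota> i))" if "orthonormal CARD('n) f" for f :: "nat \<Rightarrow> complex^'n"
    by (rule rows_corth) (use that rng inj in \<open>auto simp: orthonormal_def\<close>)
  define \<alpha> :: "complex^'n" where "\<alpha> = (\<chi> i. if \<iota> i < k then ra (\<iota> i) * rb (\<iota> i) * rc (\<iota> i) else 0)"
  define T where "T = (\<Sum>j<k. outer3 (u j) (v j) (w j))"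
  have "\<forall>x y z. trilin T x y z = diag_form \<alpha> ((\<chi> i. a (\<iota> i)) *v x) ((\<chi> i. b (\<iota> i)) *v y) ((\<chi> i. c (\<iota> i)) *v z)"
  proof (intro allI)
    fix x y z
    define g where "g j = (if j < k then ra j * rb j * rc j * bil (a j) x * bil (b j) y * bil (c j) z else 0)" for j
    have "diag_form \<alpha> ((\<chi> i. a (\<iota> i)) *v x) ((\<chi> i. b (\<iota> i)) *v y) ((\<chi> i. c (\<iota> i)) *v z)
        = (\<Sum>i\<in>UNIV. g (\<iota> i))"
      unfolding diag_form_def mv_bil by (intro sum.cong) (auto simp: \<alpha>_def g_def)
    also have "\<dots> = (\<Sum>j\<in>{0..<CARD('n)}. g j)" by (rule sum.reindex_bij_betw[OF bij])
    also have "\<dots> = (\<Sum>j<k. ra j * rb j * rc j * bil (a j) x * bil (b j) y * bil (c j) z)"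
    proof -
      have "(\<Sum>j\<in>{0..<CARD('n)}. g j) = (\<Sum>j\<in>{0..<CARD('n)} \<inter> {..<k}. ra j * rb j * rc j * bil (a j) x * bil (b j) y * bil (c j) z)"
        unfolding g_def by (simp add: sum.inter_restrict)
      also have "{0..<CARD('n)} \<inter> {..<k} = {..<k}" using kn by auto
      finally show ?thesis .
    qed
    also have "\<dots> = trilin T x y z"
      unfolding T_def trilin_sum trilin_outer3
      by (intro sum.cong refl) (simp add: a(2) b(2) c(2) bil_scale_left)
    finally show "trilin T x y z = diag_form \<alpha> ((\<chi> i. a (\<iota> i)) *v x) ((\<chi> i. b (\<iota> i)) *v y) ((\<chi> i. c (\<iota> i)) *v z)" by simp
  qed
  then show ?thesis unfolding OT_def T_def using mk a(1) b(1) c(1) by blast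
qed

lemma dual_exists:
  assumes ind: "indep k (u::nat \<Rightarrow> complex^'n::finite)"
  shows "\<exists>z. \<forall>j<k. \<forall>l<k. bil (u l) (z j) = (if l = j then 1 else 0)"
proof -
  define B0 where "B0 = u ` {..<k}"
  have iB0: "vec.independent B0" unfolding B0_def by (rule indep_vec[OF ind])
  define B where "B = vec.extend_basis B0"
  have B0B: "B0 \<subseteq> B" unfolding B_def by (rule vec.extend_basis_superset[OF iB0])
  have iB: "vec.independent B" unfolding B_def by (rule vec.independent_extend_basis[OF iB0])
  have sB: "vec.span B = UNIV" unfolding B_def by (rule vec.span_extend_basis[OF iB0])
  have fB: "finite B" by (rule vec.finiteI_independent[OF iB])
  have "card B = vec.dim (UNIV :: (complex^'n) set)"
    by (rule vec.basis_card_eq_dim) (use iB sB in auto)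
  also have "\<dots> = CARD('n)" by (rule vec_dim_card)
  finally have cB: "card B = card (UNIV :: 'n set)" .
  obtain f where f: "bij_betw f (UNIV :: 'n set) B"
    using finite_same_card_bij[OF _ fB cB[symmetric]] by auto
  define M :: "complex^'n^'n" where "M = (\<chi> i. f i)"
  have rowM: "row i M = f i" for i unfolding M_def row_def by (simp add: vec_eq_iff)
  have "\<forall>c. (\<Sum>i\<in>UNIV. c i *s row i M) = 0 \<longrightarrow> (\<forall>i. c i = 0)"
  proof (intro allI impI)
    fix c :: "'n \<Rightarrow> complex" and i
    assume s: "(\<Sum>i\<in>UNIV. c i *s row i M) = 0"
    define d where "d v = c (inv_into UNIV f v)" for v
    have injf: "inj f" using f by (simp add: bij_betw_def)
    have "(\<Sum>v\<in>B. d v *s v) = (\<Sum>i\<in>UNIV. d (f i) *s f i)"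
      using sum.reindex_bij_betw[OF f, of "\<lambda>v. d v *s v"] by simp
    also have "\<dots> = (\<Sum>i\<in>UNIV. c i *s row i M)" by (simp add: d_def injf rowM)
    finally have "(\<Sum>v\<in>B. d v *s v) = 0" using s by simp
    then have "\<forall>v\<in>B. d v = 0" using iB unfolding vec.independent_explicit by blast
    then have "d (f i) = 0" using f by (auto simp: bij_betw_def)
    then show "c i = 0" by (simp add: d_def injf)
  qed
  then obtain N :: "complex^'n^'n" where MN: "M ** N = mat 1"
    using matrix_right_invertible_independent_rows by blast
  define idx where "idx l = inv_into UNIV f (u l)" for l
  have fidx: "f (idx l) = u l" if "l < k" for l
  proof -
    have "u l \<in> B" using B0B that by (auto simp: B0_def)
    then show ?thesis unfolding idx_def using f by (simp add: bij_betw_def f_inv_into_f)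
  qed
  have injidx: "idx l = idx l' \<longleftrightarrow> l = l'" if "l < k" "l' < k" for l l'
    using fidx[OF that(1)] fidx[OF that(2)] indep_inj[OF ind] that
    by (metis inj_onD lessThan_iff)
  define z where "z j = (\<chi> p. N $ p $ idx j)" for j
  show ?thesis
  proof (intro exI allI impI)
    fix j l assume jl: "j < k" "l < k"
    have "bil (u l) (z j) = (M ** N) $ idx l $ idx j"
      unfolding bil_def z_def matrix_matrix_mult_def M_def using fidx[OF jl(2)] by simp
    also have "\<dots> = (if l = j then 1 else 0)" using MN injidx[OF jl(2) jl(1)] by (simp add: mat_def)
    finally show "bil (u l) (z j) = (if l = j then 1 else 0)" .
  qed
qed

lemma perturb:
  assumes lio: "lin_indep_orth k (u::nat \<Rightarrow> complex^'n::finite)"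
  shows "\<exists>y. \<forall>\<epsilon>. \<epsilon> \<noteq> 0 \<longrightarrow> orthnz k (\<lambda>j. u j + \<epsilon> *s y j)"
proof -
  have ind: "indep k u" using lio unfolding lin_indep_orth_def indep_def by blast
  have orth: "\<And>i j. i < k \<Longrightarrow> j < k \<Longrightarrow> i \<noteq> j \<Longrightarrow> bil (u i) (u j) = 0"
    using lio unfolding lin_indep_orth_def by blast
  obtain z where z: "\<And>j l. j < k \<Longrightarrow> l < k \<Longrightarrow> bil (u l) (z j) = (if l = j then 1 else 0)"
    using dual_exists[OF ind] by blast
  define I where "I = {j. j < k \<and> bil (u j) (u j) = 0}"
  have fI: "finite I" unfolding I_def by simp
  have Q0: "bil (u l) (u p) = 0" if "l < k" "p \<in> I" for l p
    using that orth[of l p] unfolding I_def by (cases "l = p") auto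
  define g where "g j m = bil (z j) (z m)" for j m
  define S where "S j = (\<Sum>p\<in>I. g j p *s u p)" for j
  define y where "y j = (if j \<in> I then z j - (1/2) *s S j else 0)" for j
  have uS: "bil (u l) (S j) = 0" if "l < k" for l j
    unfolding S_def bil_sum_right bil_scale_right using Q0[OF that] by simp
  have F1: "bil (u l) (y j) = (if l = j \<and> j \<in> I then 1 else 0)" if "l < k" for l j
  proof (cases "j \<in> I")
    case True
    then have "j < k" unfolding I_def by simp
    then show ?thesis using True that z[of j l] uS[OF that, of j]
      by (simp add: y_def bil_diff_right bil_scale_right)
  next
    case False
    then show ?thesis by (simp add: y_def)
  qed
  have zS: "bil (z j) (S m) = g m j" if "j \<in> I" for j m
  proof -
    have jk: "j < k" using that unfolding I_def by simp
    have zu: "bil (z j) (u p) = (if p = j then 1 else 0)" if "p \<in> I" for p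
      using z[OF jk, of p] that bil_sym[of "z j" "u p"] unfolding I_def by simp
    have "bil (z j) (S m) = (\<Sum>p\<in>I. g m p * (if p = j then 1 else 0))"
      unfolding S_def bil_sum_right bil_scale_right
      by (intro sum.cong refl) (simp add: zu)
    also have "\<dots> = g m j" using that fI by (simp add: if_distrib cong: if_cong)
    finally show ?thesis .
  qed
  have SS: "bil (S j) (S m) = 0" for j m
  proof -
    have "bil (S j) (S m) = (\<Sum>p\<in>I. g j p * bil (u p) (S m))"
      unfolding S_def[of j] bil_sum_left bil_scale_left by simp
    also have "\<dots> = 0" using uS I_def by simp
    finally show ?thesis .
  qed
  have F2: "bil (y j) (y m) = 0" for j m
  proof (cases "j \<in> I \<and> m \<in> I")
    case True
    have "bil (y j) (y m) = g j m - (1/2) * bil (z j) (S m) - (1/2) * bil (S j) (z m) + (1/4) * bil (S j) (S m)"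
      using True by (simp add: y_def g_def bil_diff_left bil_diff_right bil_scale_left bil_scale_right algebra_simps)
    also have "\<dots> = 0" using True zS[of j m] zS[of m j] SS[of j m] bil_sym[of "S j" "z m"]
      by (simp add: g_def bil_sym[of "z m" "z j"])
    finally show ?thesis .
  next
    case False
    then show ?thesis by (auto simp: y_def)
  qed
  have key: "bil (u j + \<epsilon> *s y j) (u m + \<epsilon> *s y m) = bil (u j) (u m) + (if j = m \<and> j \<in> I then 2 * \<epsilon> else 0)"
    if "j < k" "m < k" for j m \<epsilon>
  proof -
    have "bil (u j + \<epsilon> *s y j) (u m + \<epsilon> *s y m) = bil (u j) (u m) + \<epsilon> * bil (u j) (y m) + \<epsilon> * bil (u m) (y j) + \<epsilon> * \<epsilon> * bil (y j) (y m)"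
      by (simp add: bil_add_left bil_add_right bil_scale_left bil_scale_right bil_sym[of "y j" "u m"] algebra_simps)
    also have "\<dots> = bil (u j) (u m) + (if j = m \<and> j \<in> I then 2 * \<epsilon> else 0)"
      using F1[OF that(1), of m] F1[OF that(2), of j] F2[of j m] by auto
    finally show ?thesis .
  qed
  show ?thesis
  proof (intro exI allI impI)
    fix \<epsilon> :: complex assume e: "\<epsilon> \<noteq> 0"
    show "orthnz k (\<lambda>j. u j + \<epsilon> *s y j)" unfolding orthnz_def
    proof (intro conjI allI impI)
      fix i j assume "i < k" "j < k" "i \<noteq> j"
      then show "bil (u i + \<epsilon> *s y i) (u j + \<epsilon> *s y j) = 0" using key orth by simp
    next
      fix j assume jk: "j < k"
      show "bil (u j + \<epsilon> *s y j) (u j + \<epsilon> *s y j) \<noteq> 0"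
        using key[OF jk jk, of \<epsilon>] e jk by (auto simp: I_def)
    qed
  qed
qed

lemma ODECO_closure:
  assumes "T \<in> (ODECO :: ('n::finite) tensor3 set)"
  shows "T \<in> closure OT"
proof -
  obtain k u v w where uvw: "lin_indep_orth k u" "lin_indep_orth k v" "lin_indep_orth k w"
    and T: "T = (\<Sum>j<k. outer3 (u j) (v j) (w j))"
    using assms unfolding ODECO_def by blast
  have kn: "k \<le> CARD('n)" using indep_le[of k u] uvw(1) unfolding lin_indep_orth_def indep_def by blast
  obtain yu where yu: "\<And>\<epsilon>. \<epsilon> \<noteq> 0 \<Longrightarrow> orthnz k (\<lambda>j. u j + \<epsilon> *s yu j)" using perturb[OF uvw(1)] by blast
  obtain yv where yv: "\<And>\<epsilon>. \<epsilon> \<noteq> 0 \<Longrightarrow> orthnz k (\<lambda>j. v j + \<epsilon> *s yv j)" using perturb[OF uvw(2)] by blast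
  obtain yw where yw: "\<And>\<epsilon>. \<epsilon> \<noteq> 0 \<Longrightarrow> orthnz k (\<lambda>j. w j + \<epsilon> *s yw j)" using perturb[OF uvw(3)] by blast
  define e :: "nat \<Rightarrow> complex" where "e m = 1 / of_nat (Suc m)" for m
  have e0: "e m \<noteq> 0" for m unfolding e_def by (metis divide_eq_0_iff of_nat_eq_0_iff nat.distinct(1) one_neq_zero)
  have elim: "e \<longlonglongrightarrow> 0" unfolding e_def using LIMSEQ_Suc[OF lim_1_over_n] by simp
  define f where "f m = (\<Sum>j<k. outer3 (u j + e m *s yu j) (v j + e m *s yv j) (w j + e m *s yw j))" for m
  have fOT: "\<forall>m. f m \<in> OT"
    unfolding f_def using sum_in_OT[OF kn yu[OF e0] yv[OF e0] yw[OF e0]] by blast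
  have "f \<longlonglongrightarrow> T"
  proof (intro vec_tendstoI)
    fix a b c
    have "((\<lambda>m. \<Sum>j<k. (u j $ a + e m * yu j $ a) * (v j $ b + e m * yv j $ b) * (w j $ c + e m * yw j $ c))
        \<longlongrightarrow> (\<Sum>j<k. (u j $ a + 0 * yu j $ a) * (v j $ b + 0 * yv j $ b) * (w j $ c + 0 * yw j $ c))) sequentially"
      by (intro tendsto_intros elim)
    then show "((\<lambda>m. f m $ a $ b $ c) \<longlongrightarrow> T $ a $ b $ c) sequentially"
      unfolding f_def T sum_component outer3_def by simp
  qed
  then show ?thesis unfolding closure_sequential using fOT by blast
qed

lemma mult_ind: "x * (if P then 1 else 0) = (if P then x else (0::complex))" by simp

lemma trilin_axis: "trilin T (axis a 1) (axis b 1) (axis c 1) = T $ a $ b $ c"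
  unfolding trilin_def axis_def by (simp add: mult_ind if_distrib[where f="\<lambda>x. x * _"] cong: if_cong)

lemma tensor_eq: "(\<And>x y z. trilin T x y z = trilin T' x y z) \<Longrightarrow> T = T'"
  by (metis trilin_axis vec_eq_iff)

lemma diag_axis: "diag_form \<alpha> x (axis m 1) (axis m 1) = \<alpha> $ m * x $ m"
  unfolding diag_form_def axis_def by (simp add: mult_ind cong: if_cong)

lemma rows_lio:
  assumes on: "\<And>i j. bil (a i) (a j) = (if i = j then 1 else (0::complex))"
    and inj: "inj_on h {..<k}" and s: "\<And>j. j < k \<Longrightarrow> s j \<noteq> 0"
  shows "lin_indep_orth k (\<lambda>j. s j *s (a (h j) :: complex^'n::finite))"
  unfolding lin_indep_orth_def
proof (intro conjI allI impI)
  fix c :: "nat \<Rightarrow> complex" and m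
  assume sum0: "(\<Sum>j<k. c j *s (s j *s a (h j))) = 0" and m: "m < k"
  have "bil (a (h m)) (\<Sum>j<k. c j *s (s j *s a (h j))) = (\<Sum>j<k. if j = m then c j * s j else 0)"
    unfolding bil_sum_right bil_scale_right
    by (intro sum.cong refl) (use inj m in \<open>auto simp: on inj_on_def\<close>)
  also have "\<dots> = c m * s m" using m by simp
  finally have "c m * s m = 0" using sum0 by simp
  then show "c m = 0" using s[OF m] by simp
next
  fix i j assume "i < k" "j < k" "i \<noteq> j"
  then have "h i \<noteq> h j" using inj by (auto simp: inj_on_def)
  then show "bil (s i *s a (h i)) (s j *s a (h j)) = 0"
    by (simp add: bil_scale_left bil_scale_right on)
qed

lemma OT_ODECO:
  assumes "T \<in> (OT :: ('n::finite) tensor3 set)"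
  shows "T \<in> ODECO"
proof -
  obtain A B C \<alpha> where ABC: "corthogonal A" "corthogonal B" "corthogonal C"
    and tr: "\<And>x y z. trilin T x y z = diag_form \<alpha> (A *v x) (B *v y) (C *v z)"
    using assms unfolding OT_def by blast
  define S where "S = {i. \<alpha> $ i \<noteq> 0}"
  obtain h where h: "bij_betw h {0..<card S} S" using ex_bij_betw_nat_finite[of S] by auto
  define k where "k = card S"
  have injh: "inj_on h {..<k}" using h by (simp add: bij_betw_def k_def lessThan_atLeast0)
  have hS: "j < k \<Longrightarrow> \<alpha> $ h j \<noteq> 0" for j using h by (auto simp: bij_betw_def k_def S_def)
  define u where "u j = \<alpha> $ h j *s A $ h j" for j
  define v where "v j = (1::complex) *s B $ h j" for j
  define w where "w j = (1::complex) *s C $ h j" for j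
  have lu: "lin_indep_orth k u" unfolding u_def
    by (rule rows_lio[OF _ injh hS]) (rule corth_rows[OF ABC(1)])
  have lv: "lin_indep_orth k v" unfolding v_def
    by (rule rows_lio[OF _ injh]) (auto simp: corth_rows[OF ABC(2)])
  have lw: "lin_indep_orth k w" unfolding w_def
    by (rule rows_lio[OF _ injh]) (auto simp: corth_rows[OF ABC(3)])
  have "T = (\<Sum>j<k. outer3 (u j) (v j) (w j))"
  proof (rule tensor_eq)
    fix x y z
    define F where "F i = \<alpha> $ i * bil (A $ i) x * bil (B $ i) y * bil (C $ i) z" for i
    have "trilin T x y z = (\<Sum>i\<in>UNIV. F i)"
      unfolding tr diag_form_def mv_bil F_def by simp
    also have "\<dots> = (\<Sum>i\<in>S. F i)"
      by (rule sum.mono_neutral_right) (auto simp: S_def F_def)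
    also have "\<dots> = (\<Sum>j\<in>{0..<card S}. F (h j))" by (rule sum.reindex_bij_betw[OF h, symmetric])
    also have "\<dots> = (\<Sum>j<k. trilin (outer3 (u j) (v j) (w j)) x y z)"
      unfolding k_def lessThan_atLeast0[symmetric] trilin_outer3
      by (intro sum.cong refl) (simp add: F_def u_def v_def w_def bil_scale_left)
    also have "\<dots> = trilin (\<Sum>j<k. outer3 (u j) (v j) (w j)) x y z" by (simp add: trilin_sum)
    finally show "trilin T x y z = trilin (\<Sum>j<k. outer3 (u j) (v j) (w j)) x y z" .
  qed
  then show ?thesis unfolding ODECO_def using lu lv lw by blast
qed


lemma OT_neq_ODECO:
  assumes "CARD('n::finite) \<ge> 2"
  shows "(OT :: 'n tensor3 set) \<noteq> ODECO"
proof -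
  obtain p q :: 'n where pq: "p \<noteq> q"
  proof -
    have "\<not> (\<forall>p q :: 'n. p = q)"
    proof
      assume "\<forall>p q :: 'n. p = q"
      then have "card (UNIV :: 'n set) \<le> Suc 0" using card_le_Suc0_iff_eq[of "UNIV :: 'n set"] by simp
      then show False using assms by simp
    qed
    then show ?thesis using that by blast
  qed
  define u0 :: "complex^'n" where "u0 = axis p 1 + \<i> *s axis q 1"
  define v0 :: "complex^'n" where "v0 = axis p 1"
  have u0p: "u0 $ p = 1" using pq by (simp add: u0_def axis_def)
  have v0p: "v0 $ p = 1" by (simp add: v0_def axis_def)
  have hpq: "axis p (1::complex) $ q = 0" "axis q (1::complex) $ p = 0" using pq by (auto simp: axis_def)
  have uu: "bil u0 u0 = 0"
    unfolding u0_def by (simp add: bil_add_left bil_add_right bil_scale_left bil_scale_right bil_axis hpq algebra_simps)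
  define T0 where "T0 = outer3 u0 v0 v0"
  have "T0 \<in> ODECO"
  proof -
    have l: "lin_indep_orth 1 (\<lambda>_. x)" if "x $ p = 1" for x :: "complex^'n"
      unfolding lin_indep_orth_def
    proof (intro conjI allI impI)
      fix c :: "nat \<Rightarrow> complex" and j assume "(\<Sum>j<1. c j *s x) = 0" "j < (1::nat)"
      then have "(c 0 *s x) $ p = 0" "j = 0" by auto
      then show "c j = 0" using that by simp
    qed auto
    have "T0 = (\<Sum>j<(1::nat). outer3 ((\<lambda>_. u0) j) ((\<lambda>_. v0) j) ((\<lambda>_. v0) j))" unfolding T0_def One_nat_def sum.lessThan_Suc by simp
    then show ?thesis unfolding ODECO_def using l[OF u0p] l[OF v0p] by blast
  qed
  moreover have "T0 \<notin> OT"
  proof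
    assume "T0 \<in> OT"
    then obtain A B C \<alpha> where ABC: "corthogonal A" "corthogonal B" "corthogonal C"
      and tr: "\<And>x y z. trilin T0 x y z = diag_form \<alpha> (A *v x) (B *v y) (C *v z)"
      unfolding OT_def by blast
    have ax: "M *v (M $ m) = axis m 1" if "corthogonal M" for M :: "complex^'n^'n" and m
      by (simp add: vec_eq_iff mv_bil corth_rows[OF that] axis_def)
    have a0: "\<alpha> $ m = 0" for m
    proof -
      define \<beta> where "\<beta> = bil v0 (B $ m) * bil v0 (C $ m)"
      have lin: "\<alpha> $ m * bil (A $ m) x = bil u0 x * \<beta>" for x
      proof -
        have "trilin T0 x (B $ m) (C $ m) = \<alpha> $ m * bil (A $ m) x"
          unfolding tr ax[OF ABC(2)] ax[OF ABC(3)] diag_axis mv_bil ..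
        then show ?thesis by (simp add: T0_def trilin_outer3 \<beta>_def mult_ac)
      qed
      have "\<alpha> $ m = \<alpha> $ m * bil (A $ m) (A $ m)" using corth_rows[OF ABC(1)] by simp
      also have "\<dots> = bil u0 (A $ m) * \<beta>" by (rule lin)
      finally have e1: "\<alpha> $ m = bil u0 (A $ m) * \<beta>" .
      have e2: "\<alpha> $ m * bil (A $ m) u0 = 0" using lin[of u0] uu by simp
      have "\<alpha> $ m * \<alpha> $ m = (\<alpha> $ m * bil (A $ m) u0) * \<beta>"
        by (subst (2) e1) (simp add: bil_sym[of u0 "A $ m"] mult_ac)
      then have "\<alpha> $ m * \<alpha> $ m = 0" using e2 by simp
      then show ?thesis by simp
    qed
    have "trilin T0 (axis p 1) (axis p 1) (axis p 1) = 1"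
      by (simp add: T0_def trilin_outer3 bil_axis u0p v0p)
    moreover have "trilin T0 (axis p 1) (axis p 1) (axis p 1) = 0"
      unfolding tr diag_form_def by (simp add: a0)
    ultimately show False by simp
  qed
  ultimately show ?thesis by blast
qed

theorem theorem47:
  assumes "CARD('n::finite) \<ge> 2"
  shows "(OT :: 'n tensor3 set) \<subseteq> ODECO \<and> (ODECO :: 'n tensor3 set) \<subseteq> closure OT
         \<and> (OT :: 'n tensor3 set) \<noteq> ODECO"
  using OT_ODECO ODECO_closure OT_neq_ODECO[OF assms] by blast

end
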